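(* On the cofree conilpotent cooperad $\mathcal{T}^c(M)$, the map $d_\psi H+Hd_\psi$ is zero in arity $1$ and is the identity in every arity $n\ge2$.
   Context: $M$ is the $\mathbb{S}$-module spanned by two arity-2 elements with trivial $\mathbb{S}_2$-action, $\mu$ of degree $1$ and $\beta$ of degree $2$. $\mathcal{T}^c(M)$ is spanned by rooted binary trees with leaves labeled $1,\dots,n$ and vertices decorated by $\mu$ or $\beta$ (arity 1 being spanned by the trivial tree); vertices are totally ordered via the planar (shuffle tree) representation, and Koszul signs refer to this order. Let $\psi:\mathcal{T}^c(M)\to M$ project onto $M$ and send $\mu\mapsto\beta$, $\beta\mapsto0$; its unique coderivation extension $d_\psi$ sends a decorated tree to the signed sum over its $\mu$-vertices of the tree with that $\mu$ replaced by $\beta$. For a binary tree $T$ and vertex $v$, let $m_v,n_v$ be the numbers of leaves above the two inputs of $v$, and $\omega(v)=m_vn_v$. Let $h:M\to M$ send $\beta\mapsto\mu$, $\mu\mapsto 0$. Define $H$ (degree $-1$) on a decorated tree with $n$ vertices as $\sum_v\frac{\omega(v)}{\binom{n+1}{2}}$ times the tree with $h$ applied to the decoration of $v$, with the Koszul sign. *)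

theory Defs
  imports Complex_Main
begin

text \<open>Generators of M: mu (degree 1) and beta (degree 2), both arity 2 with trivial S2-action.\<close>
datatype gen = Mu | Beta

fun gdeg :: "gen \<Rightarrow> nat" where
  "gdeg Mu = 1" | "gdeg Beta = 2"

text \<open>Since the S2-action is trivial,
  a basis element of the cofree cooperad is represented by its shuffle-tree (planar)
  representative: at each vertex the left subtree contains the smaller minimal leaf.\<close>
datatype dtree = Leaf nat | Node gen dtree dtree

fun leaves :: "dtree \<Rightarrow> nat list" where
  "leaves (Leaf i) = [i]"
| "leaves (Node a l r) = leaves l @ leaves r"

fun is_shuffle :: "dtree \<Rightarrow> bool" where
  "is_shuffle (Leaf i) = True"
| "is_shuffle (Node a l r) =
     (is_shuffle l \<and> is_shuffle r \<and> Min (set (leaves l)) < Min (set (leaves r)))"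

definition shuffle_tree :: "nat \<Rightarrow> dtree \<Rightarrow> bool" where
  "shuffle_tree n t \<longleftrightarrow> distinct (leaves t) \<and> set (leaves t) = {1..n} \<and> is_shuffle t"

text \<open>Vertices in their total order (preorder of the planar shuffle representative).\<close>
fun decs :: "dtree \<Rightarrow> gen list" where
  "decs (Leaf i) = []"
| "decs (Node a l r) = a # decs l @ decs r"

definition nverts :: "dtree \<Rightarrow> nat" where
  "nverts t = length (decs t)"

fun set_dec :: "dtree \<Rightarrow> nat \<Rightarrow> gen \<Rightarrow> dtree" where
  "set_dec (Leaf i) k b = Leaf i"
| "set_dec (Node a l r) k b =
     (if k = 0 then Node b l r
      else if k - 1 < nverts l then Node a (set_dec l (k - 1) b) r
      else Node a l (set_dec r (k - 1 - nverts l) b))"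

fun omega_at :: "dtree \<Rightarrow> nat \<Rightarrow> nat" where
  "omega_at (Leaf i) k = 0"
| "omega_at (Node a l r) k =
     (if k = 0 then length (leaves l) * length (leaves r)
      else if k - 1 < nverts l then omega_at l (k - 1)
      else omega_at r (k - 1 - nverts l))"

text \<open>Koszul sign for a degree +-1 map applied at the k-th vertex.\<close>
definition ksign :: "dtree \<Rightarrow> nat \<Rightarrow> real" where
  "ksign t k = (-1) ^ (\<Sum>j<k. gdeg (decs t ! j))"

definition Tc :: "nat \<Rightarrow> (dtree \<Rightarrow> real) set" where
  "Tc n = {x. finite {t. x t \<noteq> 0} \<and> (\<forall>t. x t \<noteq> 0 \<longrightarrow> shuffle_tree n t)}"

definition lin :: "(dtree \<Rightarrow> dtree \<Rightarrow> real) \<Rightarrow> (dtree \<Rightarrow> real) \<Rightarrow> dtree \<Rightarrow> real" where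
  "lin f x = (\<lambda>s. \<Sum>t\<in>{t. x t \<noteq> 0}. x t * f t s)"

definition dpsi_b :: "dtree \<Rightarrow> dtree \<Rightarrow> real" where
  "dpsi_b t = (\<lambda>s. \<Sum>k<nverts t.
      if decs t ! k = Mu \<and> s = set_dec t k Beta then ksign t k else 0)"

definition H_b :: "dtree \<Rightarrow> dtree \<Rightarrow> real" where
  "H_b t = (\<lambda>s. \<Sum>k<nverts t.
      if decs t ! k = Beta \<and> s = set_dec t k Mu
      then ksign t k * (real (omega_at t k) / real ((nverts t + 1) choose 2)) else 0)"

definition dpsi :: "(dtree \<Rightarrow> real) \<Rightarrow> dtree \<Rightarrow> real" where
  "dpsi = lin dpsi_b"

definition Hop :: "(dtree \<Rightarrow> real) \<Rightarrow> dtree \<Rightarrow> real" where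
  "Hop = lin H_b"

end

theory Submission
  imports Defs
begin

lemma sum_split_add: "(\<Sum>k<a+b. f k) = (\<Sum>k<a. f k) + (\<Sum>k<b. f (a+k))" for f :: "nat \<Rightarrow> 'a::comm_monoid_add"
  by (induction b) (simp_all add: add.assoc)

lemma decs_set_dec: "decs (set_dec t k b) = (decs t)[k := b]"
proof (induction t arbitrary: k)
  case (Leaf x) then show ?case by simp
next
  case (Node a l r)
  show ?case
  proof (cases k)
    case 0 then show ?thesis by simp
  next
    case (Suc m)
    then show ?thesis using Node by (auto simp: nverts_def list_update_append)
  qed
qed

lemma nverts_set_dec[simp]: "nverts (set_dec t k b) = nverts t"
  by (simp add: nverts_def decs_set_dec)

lemma leaves_set_dec[simp]: "leaves (set_dec t k b) = leaves t"
  by (induction t arbitrary: k) auto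

lemma omega_set_dec[simp]: "omega_at (set_dec t k b) j = omega_at t j"
  by (induction t arbitrary: k j) auto

fun strip :: "dtree \<Rightarrow> dtree" where
  "strip (Leaf i) = Leaf i"
| "strip (Node a l r) = Node Mu (strip l) (strip r)"

lemma strip_set_dec[simp]: "strip (set_dec t k b) = strip t"
  by (induction t arbitrary: k) auto

lemma len_decs_strip: "length (decs (strip t)) = length (decs t)"
  by (induction t) auto

lemma strip_eq: "strip t = strip u \<Longrightarrow> decs t = decs u \<Longrightarrow> t = u"
proof (induction t arbitrary: u)
  case (Leaf x) then show ?case by (cases u) auto
next
  case (Node a l r)
  then show ?case
  proof (cases u)
    case (Leaf y) then show ?thesis using Node by simp
  next
    case (Node a' l' r')
    have s: "strip l = strip l'" "strip r = strip r'" using Node.prems Node by auto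
    have "length (decs l) = length (decs l')" using s(1) len_decs_strip by metis
    then have "decs l = decs l'" "decs r = decs r'" "a = a'" using Node.prems Node by auto
    then show ?thesis using Node Node.IH s by auto
  qed
qed

lemma tree_eqI: "decs t = decs u \<Longrightarrow> strip t = strip u \<Longrightarrow> t = u"
  using strip_eq by blast

lemma nverts_leaves: "Suc (nverts t) = length (leaves t)"
  by (induction t) (auto simp: nverts_def)

lemma omega_sum: "2 * (\<Sum>k<nverts t. omega_at t k) = length (leaves t) * (length (leaves t) - 1)"
proof (induction t)
  case (Leaf x) then show ?case by (simp add: nverts_def)
next
  case (Node a l r)
  have nv: "nverts (Node a l r) = Suc (nverts l + nverts r)" by (simp add: nverts_def)
  have "(\<Sum>k<nverts (Node a l r). omega_at (Node a l r) k) =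
     length (leaves l) * length (leaves r) + (\<Sum>k<nverts l. omega_at l k) + (\<Sum>k<nverts r. omega_at r k)"
    unfolding nv sum.lessThan_Suc_shift sum_split_add by simp
  moreover obtain p q where "length (leaves l) = Suc p" "length (leaves r) = Suc q"
    using nverts_leaves by metis
  ultimately show ?case using Node.IH by (simp add: algebra_simps)
qed

lemma omega_choose: "(\<Sum>k<nverts t. omega_at t k) = length (leaves t) choose 2"
  using omega_sum[of t] by (simp add: choose_two)


definition sg :: "gen list \<Rightarrow> nat \<Rightarrow> real" where
  "sg L k = (-1) ^ (\<Sum>i<k. gdeg (L!i))"

lemma ksign_sg: "ksign t k = sg (decs t) k"
  by (simp add: ksign_def sg_def)

lemma sg_sq: "sg L k * sg L k = 1"
  by (simp add: sg_def flip: power_add)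

lemma sg_upd_le: "k \<le> m \<Longrightarrow> sg (L[m:=b]) k = sg L k"
  unfolding sg_def by (intro arg_cong[where f="\<lambda>x. (-1::real)^x"] sum.cong) auto

lemma sg_flip:
  assumes "m < k" "m < length L" "gdeg b + 1 = gdeg (L!m) \<or> gdeg (L!m) + 1 = gdeg b"
  shows "sg (L[m:=b]) k = - sg L k"
proof -
  have mk: "m \<in> {..<k}" using assms by simp
  have e1: "(\<Sum>i<k. gdeg (L[m:=b]!i)) = gdeg b + (\<Sum>i\<in>{..<k}-{m}. gdeg (L!i))"
    using sum.remove[OF finite_lessThan mk, of "\<lambda>i. gdeg (L[m:=b]!i)"] assms
    by (simp add: sum.cong[OF refl, of _ "\<lambda>i. gdeg (L[m:=b]!i)" "\<lambda>i. gdeg (L!i)"])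
  have e2: "(\<Sum>i<k. gdeg (L!i)) = gdeg (L!m) + (\<Sum>i\<in>{..<k}-{m}. gdeg (L!i))"
    using sum.remove[OF finite_lessThan mk] by simp
  have "(-1::real) ^ gdeg b = - ((-1) ^ gdeg (L!m))"
    using assms(3) by (metis mult_minus1 power_Suc Suc_eq_plus1 minus_minus)
  then show ?thesis unfolding sg_def e1 e2 by (simp add: power_add)
qed


lemma set_dec_twice: "set_dec (set_dec t k a) k b = set_dec t k b"
  by (rule tree_eqI) (simp_all add: decs_set_dec)

lemma set_dec_id: "set_dec t k (decs t ! k) = t"
  by (rule tree_eqI) (simp_all add: decs_set_dec)

lemma set_dec_swap: "k \<noteq> j \<Longrightarrow> set_dec (set_dec t k a) j b = set_dec (set_dec t j b) k a"
  by (rule tree_eqI) (simp_all add: decs_set_dec list_update_swap)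

lemma gen_cases: "x \<noteq> Beta \<Longrightarrow> x = Mu" by (cases x) auto

lemma pointwise:
  fixes t s and W :: "nat \<Rightarrow> real"
  defines "D \<equiv> decs t"
  assumes k: "k < length D" and j: "j < length D"
  shows "(if D!k = Beta then sg D k * W k *
            (if D[k:=Mu]!j = Mu \<and> s = set_dec (set_dec t k Mu) j Beta then sg (D[k:=Mu]) j else 0) else 0)
       + (if D!j = Mu then sg D j *
            (if D[j:=Beta]!k = Beta \<and> s = set_dec (set_dec t j Beta) k Mu then sg (D[j:=Beta]) k * W k else 0) else 0)
       = (if k = j \<and> s = t then W k else 0)"
proof (cases "k = j")
  case True
  have "D!k = Beta \<or> D!k = Mu" by (cases "D!k") auto
  then show ?thesis
  proof
    assume b: "D!k = Beta"
    have "set_dec (set_dec t k Mu) k Beta = t" using b set_dec_id[of t k] by (simp add: set_dec_twice D_def)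
    then show ?thesis using True b k sg_upd_le[of k k D] sg_sq[of D k] by (auto simp: algebra_simps)
  next
    assume b: "D!k = Mu"
    have "set_dec (set_dec t k Beta) k Mu = t" using b set_dec_id[of t k] by (simp add: set_dec_twice D_def)
    then show ?thesis using True b k sg_upd_le[of k k D] sg_sq[of D k] by (auto simp: algebra_simps)
  qed
next
  case False
  have sw: "set_dec (set_dec t k Mu) j Beta = set_dec (set_dec t j Beta) k Mu"
    using set_dec_swap[OF False] .
  show ?thesis
  proof (cases "D!k = Beta \<and> D!j = Mu \<and> s = set_dec (set_dec t j Beta) k Mu")
    case c: True
    have "k < j \<or> j < k" using False by arith
    then show ?thesis
    proof
      assume kj: "k < j"
      have "sg (D[k:=Mu]) j = - sg D j" using sg_flip[of k j D Mu] kj k c by simp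
      moreover have "sg (D[j:=Beta]) k = sg D k" using sg_upd_le kj by simp
      ultimately show ?thesis using c False sw by auto
    next
      assume kj: "j < k"
      have "sg (D[j:=Beta]) k = - sg D k" using sg_flip[of j k D Beta] kj j c by simp
      moreover have "sg (D[k:=Mu]) j = sg D j" using sg_upd_le kj by simp
      ultimately show ?thesis using c False sw by auto
    qed
  next
    case c: False
    then show ?thesis using False sw by auto
  qed
qed


lemma tree_core:
  fixes t s
  defines "W \<equiv> \<lambda>k. real (omega_at t k) / real ((nverts t + 1) choose 2)"
  shows "(\<Sum>k<nverts t. if decs t!k = Beta then ksign t k * W k * dpsi_b (set_dec t k Mu) s else 0)
   + (\<Sum>j<nverts t. if decs t!j = Mu then ksign t j * H_b (set_dec t j Beta) s else 0)
   = (if s = t then (\<Sum>k<nverts t. W k) else 0)"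
proof -
  define D where "D = decs t"
  define N where "N = nverts t"
  have N: "N = length D" unfolding N_def D_def nverts_def by simp
  define A where "A = (\<lambda>k j. if D!k = Beta then sg D k * W k *
            (if D[k:=Mu]!j = Mu \<and> s = set_dec (set_dec t k Mu) j Beta then sg (D[k:=Mu]) j else 0) else 0)"
  define B where "B = (\<lambda>k j. if D!j = Mu then sg D j *
            (if D[j:=Beta]!k = Beta \<and> s = set_dec (set_dec t j Beta) k Mu then sg (D[j:=Beta]) k * W k else 0) else 0)"
  have 1: "(if decs t!k = Beta then ksign t k * W k * dpsi_b (set_dec t k Mu) s else 0) = (\<Sum>j<N. A k j)" for k
    unfolding A_def dpsi_b_def ksign_sg D_def N_def decs_set_dec nverts_set_dec by (simp add: decs_set_dec sum_distrib_left)
  have 2: "(if decs t!j = Mu then ksign t j * H_b (set_dec t j Beta) s else 0) = (\<Sum>k<N. B k j)" for j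
    unfolding B_def H_b_def W_def ksign_sg D_def N_def decs_set_dec nverts_set_dec omega_set_dec by (simp add: decs_set_dec sum_distrib_left)
  have "(\<Sum>k<N. \<Sum>j<N. A k j) + (\<Sum>j<N. \<Sum>k<N. B k j) = (\<Sum>k<N. \<Sum>j<N. A k j + B k j)"
    by (simp add: sum.swap[of B] sum.distrib)
  also have "\<dots> = (\<Sum>k<N. \<Sum>j<N. if k = j \<and> s = t then W k else 0)"
    unfolding A_def B_def D_def
    by (intro sum.cong refl pointwise) (auto simp: N D_def)
  also have "\<dots> = (if s = t then (\<Sum>k<N. W k) else 0)"
    by (auto intro: sum.cong)
  finally show ?thesis unfolding 1 2 N_def .
qed

lemma delta_helper:
  fixes g :: "dtree \<Rightarrow> real"
  assumes "finite U" "a \<in> U"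
  shows "(\<Sum>u\<in>U. (if P \<and> u = a then c else 0) * g u) = (if P then c * g a else 0)"
proof -
  have "(\<Sum>u\<in>U. (if P \<and> u = a then c else 0) * g u) = (\<Sum>u\<in>U. if u = a then (if P then c * g u else 0) else 0)"
    by (intro sum.cong) auto
  also have "\<dots> = (if P then c * g a else 0)" using assms by (simp add: sum.delta')
  finally show ?thesis .
qed

lemma H_expand:
  assumes "finite U" "\<And>k. k < nverts t \<Longrightarrow> set_dec t k Mu \<in> U"
  fixes g :: "dtree \<Rightarrow> real"
  shows "(\<Sum>u\<in>U. H_b t u * g u) = (\<Sum>k<nverts t. if decs t!k = Beta then
      ksign t k * (real (omega_at t k) / real ((nverts t + 1) choose 2)) * g (set_dec t k Mu) else 0)"
proof -
  have "(\<Sum>u\<in>U. H_b t u * g u) = (\<Sum>k<nverts t. \<Sum>u\<in>U. (if decs t ! k = Beta \<and> u = set_dec t k Mu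
      then ksign t k * (real (omega_at t k) / real ((nverts t + 1) choose 2)) else 0) * g u)"
    unfolding H_b_def by (simp add: sum_distrib_right sum.swap[of _ U] eq_commute[of _ "set_dec _ _ _"])
  also have "\<dots> = (\<Sum>k<nverts t. if decs t!k = Beta then
      ksign t k * (real (omega_at t k) / real ((nverts t + 1) choose 2)) * g (set_dec t k Mu) else 0)"
    by (intro sum.cong refl delta_helper assms) auto
  finally show ?thesis .
qed

lemma D_expand:
  assumes "finite U" "\<And>k. k < nverts t \<Longrightarrow> set_dec t k Beta \<in> U"
  fixes g :: "dtree \<Rightarrow> real"
  shows "(\<Sum>u\<in>U. dpsi_b t u * g u) = (\<Sum>k<nverts t. if decs t!k = Mu then
      ksign t k * g (set_dec t k Beta) else 0)"
proof -
  have "(\<Sum>u\<in>U. dpsi_b t u * g u) = (\<Sum>k<nverts t. \<Sum>u\<in>U. (if decs t ! k = Mu \<and> u = set_dec t k Beta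
      then ksign t k else 0) * g u)"
    unfolding dpsi_b_def by (simp add: sum_distrib_right sum.swap[of _ U] eq_commute[of _ "set_dec _ _ _"])
  also have "\<dots> = (\<Sum>k<nverts t. if decs t!k = Mu then ksign t k * g (set_dec t k Beta) else 0)"
    by (intro sum.cong refl delta_helper assms) auto
  finally show ?thesis .
qed


lemma lin_superset:
  assumes "finite S" "{t. x t \<noteq> 0} \<subseteq> S"
  shows "lin f x s = (\<Sum>t\<in>S. x t * f t s)"
  unfolding lin_def using assms by (intro sum.mono_neutral_left) auto

lemma W_sum:
  assumes "shuffle_tree n t" "n \<ge> 1"
  shows "(\<Sum>k<nverts t. real (omega_at t k) / real ((nverts t + 1) choose 2)) = (if n = 1 then 0 else 1)"
proof -
  have L: "length (leaves t) = n"
    using assms(1) unfolding shuffle_tree_def by (metis card_atLeastAtMost diff_Suc_1 distinct_card)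
  have nv: "nverts t + 1 = n" using nverts_leaves[of t] L by simp
  have "(\<Sum>k<nverts t. real (omega_at t k) / real ((nverts t + 1) choose 2))
      = real (\<Sum>k<nverts t. omega_at t k) / real (n choose 2)"
    using nv by (simp add: sum_divide_distrib)
  also have "\<dots> = real (n choose 2) / real (n choose 2)" using omega_choose[of t] L by simp
  also have "\<dots> = (if n = 1 then 0 else 1)"
  proof (cases "n = 1")
    case False
    then have "n choose 2 > 0" using assms(2) by (simp add: zero_less_binomial_iff)
    then show ?thesis using False by simp
  qed simp
  finally show ?thesis .
qed

theorem lemma2p3:
  fixes n :: nat and x :: "dtree \<Rightarrow> real"
  assumes "n \<ge> 1" and "x \<in> Tc n"
  shows "(\<lambda>s. dpsi (Hop x) s + Hop (dpsi x) s) = (if n = 1 then (\<lambda>s. 0) else x)"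
proof
  fix s
  define X where "X = {t. x t \<noteq> 0}"
  have finX: "finite X" and shX: "\<And>t. t \<in> X \<Longrightarrow> shuffle_tree n t"
    using assms(2) unfolding Tc_def X_def by auto
  define SM where "SM = (\<Union>t\<in>X. (\<lambda>k. set_dec t k Mu) ` {..<nverts t})"
  define SB where "SB = (\<Union>t\<in>X. (\<lambda>k. set_dec t k Beta) ` {..<nverts t})"
  have finSM: "finite SM" and finSB: "finite SB" unfolding SM_def SB_def using finX by auto
  have Hx: "\<And>u. Hop x u = (\<Sum>t\<in>X. x t * H_b t u)"
    unfolding Hop_def X_def by (rule lin_superset) (use finX X_def in auto)
  have Dx: "\<And>u. dpsi x u = (\<Sum>t\<in>X. x t * dpsi_b t u)"
    unfolding dpsi_def X_def by (rule lin_superset) (use finX X_def in auto)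
  have zH: "Hop x u = 0" if u: "u \<notin> SM" for u
  proof -
    have "H_b t u = 0" if "t \<in> X" for t
      unfolding H_b_def proof (intro sum.neutral ballI) fix k assume "k \<in> {..<nverts t}" then have "set_dec t k Mu \<in> SM" using that unfolding SM_def by blast then show "(if decs t ! k = Beta \<and> u = set_dec t k Mu then ksign t k * (real (omega_at t k) / real (nverts t + 1 choose 2)) else 0) = 0" using u by auto qed
    then show ?thesis unfolding Hx by simp
  qed
  have suppH: "{u. Hop x u \<noteq> 0} \<subseteq> SM" using zH by blast
  have zD: "dpsi x u = 0" if u: "u \<notin> SB" for u
  proof -
    have "dpsi_b t u = 0" if "t \<in> X" for t
      unfolding dpsi_b_def proof (intro sum.neutral ballI) fix k assume "k \<in> {..<nverts t}" then have "set_dec t k Beta \<in> SB" using that unfolding SB_def by blast then show "(if decs t ! k = Mu \<and> u = set_dec t k Beta then ksign t k else 0) = 0" using u by auto qed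
    then show ?thesis unfolding Dx by simp
  qed
  have suppD: "{u. dpsi x u \<noteq> 0} \<subseteq> SB" using zD by blast
  define W where "W = (\<lambda>t k. real (omega_at t k) / real ((nverts t + 1) choose 2))"
  have "dpsi (Hop x) s = (\<Sum>u\<in>SM. Hop x u * dpsi_b u s)"
    unfolding dpsi_def by (rule lin_superset[OF finSM suppH])
  also have "\<dots> = (\<Sum>t\<in>X. x t * (\<Sum>u\<in>SM. H_b t u * dpsi_b u s))"
    unfolding Hx by (simp add: sum_distrib_right sum_distrib_left sum.swap[of _ SM] mult.assoc)
  also have "\<dots> = (\<Sum>t\<in>X. x t * (\<Sum>k<nverts t. if decs t!k = Beta then ksign t k * W t k * dpsi_b (set_dec t k Mu) s else 0))"
    unfolding W_def by (intro sum.cong refl arg_cong2[where f="(*)"] H_expand finSM) (auto simp: SM_def)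
  finally have e1: "dpsi (Hop x) s = \<dots>" .
  have "Hop (dpsi x) s = (\<Sum>u\<in>SB. dpsi x u * H_b u s)"
    unfolding Hop_def by (rule lin_superset[OF finSB suppD])
  also have "\<dots> = (\<Sum>t\<in>X. x t * (\<Sum>u\<in>SB. dpsi_b t u * H_b u s))"
    unfolding Dx by (simp add: sum_distrib_right sum_distrib_left sum.swap[of _ SB] mult.assoc)
  also have "\<dots> = (\<Sum>t\<in>X. x t * (\<Sum>j<nverts t. if decs t!j = Mu then ksign t j * H_b (set_dec t j Beta) s else 0))"
    by (intro sum.cong refl arg_cong2[where f="(*)"] D_expand finSB) (auto simp: SB_def)
  finally have e2: "Hop (dpsi x) s = \<dots>" .
  have core: "(\<Sum>k<nverts t. if decs t!k = Beta then ksign t k * W t k * dpsi_b (set_dec t k Mu) s else 0)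
      + (\<Sum>j<nverts t. if decs t!j = Mu then ksign t j * H_b (set_dec t j Beta) s else 0)
      = (if s = t then (if n = 1 then 0 else 1) else 0)" if "t \<in> X" for t
    unfolding W_def tree_core using W_sum[OF shX[OF that] assms(1)] by simp
  have "dpsi (Hop x) s + Hop (dpsi x) s = (\<Sum>t\<in>X. x t * (if s = t then (if n = 1 then 0 else 1) else 0))"
  proof -
    have "dpsi (Hop x) s + Hop (dpsi x) s = (\<Sum>t\<in>X. x t * ((\<Sum>k<nverts t. if decs t!k = Beta then ksign t k * W t k * dpsi_b (set_dec t k Mu) s else 0)
      + (\<Sum>j<nverts t. if decs t!j = Mu then ksign t j * H_b (set_dec t j Beta) s else 0)))"
      unfolding e1 e2 by (simp only: sum.distrib distrib_left)
    also have "\<dots> = (\<Sum>t\<in>X. x t * (if s = t then (if n = 1 then 0 else 1) else 0))"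
      using core by (intro sum.cong refl) simp
    finally show ?thesis .
  qed
  also have "\<dots> = (if n = 1 then 0 else x s)"
  proof -
    have "(\<Sum>t\<in>X. x t * (if s = t then (if n = 1 then 0 else 1) else 0))
        = (\<Sum>t\<in>X. if t = s then x s * (if n = 1 then 0 else 1) else 0)"
      by (intro sum.cong) auto
    also have "\<dots> = (if n = 1 then 0 else x s)" using finX by (simp add: sum.delta' X_def)
    finally show ?thesis .
  qed
  finally show "dpsi (Hop x) s + Hop (dpsi x) s = (if n = 1 then (\<lambda>s. 0) else x) s" by simp
qed

end
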